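(* Let $P(x)=\sum_{I\in\mathcal{I}}a_Ix^I$ be a polynomial in $x=(x_1,\dots,x_n)$, $n\ge2$, with $\mathcal{I}\subset\mathbb{N}^n$ finite containing all $I$ with $|I|\le1$, $a_I>0$ on $\mathcal{I}$, $a_I=1$ for $|I|\le1$, which solves $$\frac{\det\Big[\big(P\,\partial_{\alpha}\partial_{\beta}P-\partial_\alpha P\,\partial_\beta P\big)x_\alpha+P\,\partial_\alpha P\,\delta_{\alpha\beta}\Big]_{1\le\alpha,\beta\le n}}{P^{n-1}}=P^{n}.$$ Then for each $i$ there are $k_i\in\mathbb{Z}^+$ and, for each $j\neq i$, $h_{ij}\in\mathbb{N}$ such that, writing $te_i$ for the point with $i$-th coordinate $t$ and other coordinates $0$, $$P(te_i)=\Big(1+\frac{t}{k_i}\Big)^{k_i},\qquad \partial_jP(te_i)=\Big(1+\frac{t}{k_i}\Big)^{h_{ij}}\ (j\ne i),$$ and moreover $\sum_{\alpha\neq i}h_{i\alpha}=k_i(n-2)+2$ for every $i$, and $\frac{h_{ij}}{k_i}=\frac{h_{ji}}{k_j}$ for all $i\neq j$.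
   Context: $\partial_\alpha=\partial/\partial x_\alpha$, $x^I=\prod_\alpha x_\alpha^{I_\alpha}$, $|I|=\sum_\alpha I_\alpha$. *)

theory Defs
  imports "HOL-Analysis.Analysis"
begin

definition mpoly_eval :: "('n::finite \<Rightarrow> nat) set \<Rightarrow> (('n \<Rightarrow> nat) \<Rightarrow> real) \<Rightarrow> real^'n \<Rightarrow> real" where
  "mpoly_eval S a x = (\<Sum>I\<in>S. a I * (\<Prod>\<alpha>\<in>UNIV. (x$\<alpha>) ^ I \<alpha>))"

definition pd :: "'n::finite \<Rightarrow> (real^'n \<Rightarrow> real) \<Rightarrow> real^'n \<Rightarrow> real" where
  "pd \<alpha> f x = deriv (\<lambda>t. f (\<chi> k. if k = \<alpha> then t else x$k)) (x$\<alpha>)"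

definition mdeg :: "('n::finite \<Rightarrow> nat) \<Rightarrow> nat" where
  "mdeg I = (\<Sum>\<alpha>\<in>UNIV. I \<alpha>)"

end

theory Submission
  imports Defs "HOL-Computational_Algebra.Computational_Algebra"
begin

definition Dop :: "'a::idom poly \<Rightarrow> 'a poly" where
  "Dop F = F * pderiv F + [:0,1:] * (F * pderiv (pderiv F) - pderiv F * pderiv F)"

lemma Dop_mult: "Dop (U*V) = V*V*Dop U + U*U*Dop V"
  unfolding Dop_def by (simp add: pderiv_mult pderiv_add) (simp add: algebra_simps)

lemma Dop_lin: "Dop [:-r,1:] = [:-r:]"
  unfolding Dop_def by (simp add: pderiv_pCons)

lemma Dop_pow: "Dop ([:-r,1:]^m) = smult (- (of_nat m) * r) ([:-r,1:]^(2*m-2))"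
proof (induction m)
  case 0 then show ?case by (simp add: Dop_def)
next
  case (Suc m)
  have "Dop ([:-r,1:]^Suc m) = Dop ([:-r,1:] * [:-r,1:]^m)" by simp
  also have "\<dots> = [:-r,1:]^m * [:-r,1:]^m * [:-r:] + [:-r,1:] * [:-r,1:] * smult (- (of_nat m) * r) ([:-r,1:]^(2*m-2))"
    by (simp only: Dop_mult Dop_lin Suc)
  also have "\<dots> = smult (- (of_nat (Suc m)) * r) ([:-r,1:]^(2*Suc m-2))"
  proof (cases m)
    case 0 then show ?thesis by simp
  next
    case (Suc m')
    then have q: "2*m-2 = m'+m'" by simp
    have e: "[:-r,1:] * [:-r,1:] * [:-r,1:]^(2*m-2) = [:-r,1:]^m * [:-r,1:]^m"
      unfolding q unfolding Suc power_add power_Suc by (simp only: ac_simps)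
    have q2: "2*Suc m-2 = m+m" by simp
    have e2: "[:-r,1:]^(2*Suc m-2) = [:-r,1:]^m * [:-r,1:]^m"
      unfolding q2 power_add ..
    define Z where "Z = [:-r,1:]^m * [:-r,1:]^m"
    have a1: "[:-r,1:]^m * [:-r,1:]^m * [:-r:] = smult (-r) Z" unfolding Z_def
      by (simp add: mult.commute[of _ "[:-r:]"])
    have a2: "[:-r,1:] * [:-r,1:] * smult (- (of_nat m) * r) ([:-r,1:]^(2*m-2)) = smult (- (of_nat m) * r) Z"
      unfolding Z_def e[symmetric] by (simp only: mult_smult_right mult.assoc)
    have a3: "smult (-r) Z + smult (- of_nat m * r) Z = smult (-r + - of_nat m * r) Z"
      by (rule smult_add_left[symmetric])
    have a4: "-r + - of_nat m * r = - of_nat (Suc m) * r" by (simp add: algebra_simps)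
    have a1': "Z * [:-r:] = smult (-r) Z" by (simp add: mult.commute[of _ "[:-r:]"])
    show ?thesis unfolding e2 a2 Z_def[symmetric] a1' a3 a4 ..
  qed
  finally show ?case .
qed

lemma order_prod_lin:
  fixes e :: "'a::idom \<Rightarrow> nat"
  assumes "finite R"
  shows "order z (\<Prod>r\<in>R. [:-r,1:]^(e r)) = (if z \<in> R then e z else 0)"
  using assms
proof (induction R rule: finite_induct)
  case empty then show ?case by simp
next
  case (insert r R)
  have nz: "(\<Prod>r\<in>R. [:-r,1:]^(e r)) \<noteq> 0" using insert by (simp add: prod_zero_iff)
  have o1: "order z ([:-r,1:]^(e r)) = (if z = r then e r else 0)"
  proof (cases "z = r")
    case True then show ?thesis by (simp add: order_power_n_n)
  next
    case False
    have "order z ([:-r,1:]^(e r)) = 0" using False by (intro order_0I) (simp add: poly_power)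
    then show ?thesis using False by simp
  qed
  have "order z (\<Prod>r\<in>insert r R. [:-r,1:]^(e r)) = order z ([:-r,1:]^(e r)) + order z (\<Prod>r\<in>R. [:-r,1:]^(e r))"
    using insert nz by (simp add: order_mult)
  then show ?case using insert o1 by auto
qed

lemma prod_lin_dvd:
  fixes e :: "'a::idom \<Rightarrow> nat"
  assumes "finite R"
  shows "p \<noteq> 0 \<Longrightarrow> (\<forall>r\<in>R. e r \<le> order r p) \<Longrightarrow> (\<Prod>r\<in>R. [:-r,1:]^(e r)) dvd p"
  using assms
proof (induction R arbitrary: p rule: finite_induct)
  case empty then show ?case by simp
next
  case (insert r R)
  have "[:-r,1:]^(e r) dvd p" using insert.prems by (simp add: order_divides)
  then obtain p' where p': "p = [:-r,1:]^(e r) * p'" by (elim dvdE)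
  have p'nz: "p' \<noteq> 0" using p' insert.prems by auto
  have "\<forall>s\<in>R. e s \<le> order s p'"
  proof
    fix s assume s: "s \<in> R"
    then have "s \<noteq> r" using insert by auto
    then have "order s ([:-r,1:]^(e r)) = 0" by (intro order_0I) (simp add: poly_power)
    moreover have "order s p = order s ([:-r,1:]^(e r)) + order s p'"
      using p' insert.prems(1) by (simp add: order_mult)
    ultimately show "e s \<le> order s p'" using insert.prems s by auto
  qed
  then have "(\<Prod>r\<in>R. [:-r,1:]^(e r)) dvd p'" using insert p'nz by blast
  then show ?case using insert p' by (simp add: mult_dvd_mono)
qed

lemma ordpos: "p \<noteq> 0 \<Longrightarrow> poly p a = 0 \<Longrightarrow> order a p \<ge> 1"
  using order_root[of p a] by (simp add: Suc_le_eq)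

lemma key_C:
  fixes F :: "complex poly"
  assumes F0: "poly F 0 = 1" and F1: "poly (pderiv F) 0 = 1" and dv: "Dop F dvd F^N"
  shows "\<exists>r. F = smult (lead_coeff F) ([:-r,1:]^degree F)"
proof -
  have Fnz: "F \<noteq> 0" using F0 by auto
  define D where "D = Dop F"
  have D0: "poly D 0 = 1" using F0 F1 by (simp add: D_def Dop_def)
  hence Dnz: "D \<noteq> 0" by auto
  define R where "R = {z. poly F z = 0}"
  have finR: "finite R" using poly_roots_finite[OF Fnz] R_def by simp
  have R0: "0 \<notin> R" using F0 R_def by auto
  from dv obtain G where FG: "F^N = D * G" by (auto simp: D_def elim: dvdE)
  have Droot: "z \<in> R" if "poly D z = 0" for z
  proof -
    have "poly F z ^ N = 0" using that FG by (metis mult_zero_left poly_mult poly_power)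
    thus "z \<in> R" using R_def by auto
  qed
  have ordD: "order r D = 2 * order r F - 2" if r: "r \<in> R" for r
  proof -
    define m where "m = order r F"
    have m1: "m \<ge> 1" using r Fnz ordpos R_def m_def by auto
    obtain q where q: "F = [:-r,1:]^m * q" "\<not> [:-r,1:] dvd q" using order_decomp[OF Fnz] m_def by blast
    have qr: "poly q r \<noteq> 0" using q(2) poly_eq_0_iff_dvd by blast
    define E where "E = smult (- of_nat m * r) (q * q) + [:-r,1:] * [:-r,1:] * Dop q"
    obtain m' where m': "m = Suc m'" using m1 by (cases m) auto
    have pw: "[:-r,1:]^m * [:-r,1:]^m = [:-r,1:]^(2*m-2) * ([:-r,1:] * [:-r,1:])"
    proof -
      have "2*m-2 = m'+m'" using m' by simp
      then show ?thesis unfolding m' by (simp only: power_add power_Suc ac_simps)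
    qed
    have DE: "D = [:-r,1:]^(2*m-2) * E"
    proof -
      have "D = q * q * smult (- of_nat m * r) ([:-r,1:]^(2*m-2)) + [:-r,1:]^m * [:-r,1:]^m * Dop q"
        unfolding D_def q(1) Dop_mult Dop_pow ..
      also have "\<dots> = [:-r,1:]^(2*m-2) * E" unfolding pw E_def distrib_left mult_smult_right
        by (simp only: ac_simps)
      finally show ?thesis .
    qed
    have "poly E r \<noteq> 0" using qr R0 r m1 by (auto simp: E_def)
    then have "order r E = 0" by (rule order_0I)
    moreover have "E \<noteq> 0" using \<open>poly E r \<noteq> 0\<close> by auto
    ultimately have "order r D = 2*m-2" using DE by (simp add: order_mult order_power_n_n)
    then show ?thesis using m_def by simp
  qed
  define L where "L = (\<Prod>r\<in>R. [:-r,1:]^(order r F - 1))"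
  define c where "c = lead_coeff F"
  have cnz: "c \<noteq> 0" using Fnz c_def by simp
  define Q where "Q = smult c (\<Prod>r\<in>R. [:-r,1:])"
  have FQL: "F = Q * L"
  proof -
    have "F = smult c (\<Prod>r\<in>R. [:-r,1:]^order r F)" using complex_poly_decompose[of F] c_def R_def by simp
    also have "(\<Prod>r\<in>R. [:-r,1:]^order r F) = (\<Prod>r\<in>R. [:-r,1:]) * L" unfolding L_def prod.distrib[symmetric]
    proof (rule prod.cong)
      fix r assume "r \<in> R"
      then have "order r F \<noteq> 0" using Fnz ordpos[of F r] R_def by auto
      then show "[:-r,1:]^order r F = [:-r,1:] * [:-r,1:]^(order r F - 1)" by (simp add: power_eq_if)
    qed simp
    finally show ?thesis unfolding Q_def by simp
  qed
  have Lnz: "L \<noteq> 0" and Qnz: "Q \<noteq> 0" using FQL Fnz by auto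
  have F'nz: "pderiv F \<noteq> 0" using F1 by auto
  have "L dvd pderiv F" unfolding L_def
  proof (rule prod_lin_dvd[OF finR F'nz], rule ballI)
    fix r assume "r \<in> R"
    then have "order r F = Suc (order r (pderiv F))" using order_pderiv[OF Fnz] R_def by auto
    then show "order r F - 1 \<le> order r (pderiv F)" by simp
  qed
  then obtain A0 where A0: "pderiv F = L * A0" by (elim dvdE)
  define A where "A = [:0,1:] * A0"
  have XA: "[:0,1:] * pderiv F = A * L" by (simp add: A0 A_def ac_simps)
  have LL: "L * L = (\<Prod>r\<in>R. [:-r,1:]^(2 * order r F - 2))" unfolding L_def prod.distrib[symmetric]
  proof (rule prod.cong)
    fix x assume "x \<in> R"
    then have "order x F \<ge> 1" using Fnz ordpos R_def by auto
    then have "2 * order x F - 2 = (order x F - 1) + (order x F - 1)" by simp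
    then show "[:-x,1:]^(order x F - 1) * [:-x,1:]^(order x F - 1) = [:-x,1:]^(2 * order x F - 2)"
      by (simp only: power_add[symmetric])
  qed simp
  have "L * L dvd D" unfolding LL
    by (rule prod_lin_dvd[OF finR Dnz]) (simp add: ordD)
  then obtain W where DW: "D = L * L * W" by (elim dvdE)
  have Wnz: "W \<noteq> 0" using DW Dnz by auto
  have Wnoroot: "\<not> (\<exists>z. poly W z = 0)"
  proof
    assume "\<exists>z. poly W z = 0"
    then obtain z where z: "poly W z = 0" by blast
    then have "poly D z = 0" using DW by simp
    then have zR: "z \<in> R" by (rule Droot)
    have "order z D = order z L + order z L + order z W" using DW Dnz by (simp add: order_mult)
    moreover have "order z L = order z F - 1" using zR finR by (simp add: L_def order_prod_lin)
    moreover have "order z F \<ge> 1" using zR Fnz ordpos R_def by auto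
    ultimately have "order z W = 0" using ordD[OF zR] by simp
    then show False using z Wnz ordpos[of W z] by simp
  qed
  have "constant (poly W)" using fundamental_theorem_of_algebra Wnoroot by blast
  then have "degree W = 0" by (simp add: constant_degree)
  then obtain \<kappa> where W\<kappa>: "W = [:\<kappa>:]" by (elim degree_eq_zeroE)
  have \<kappa>nz: "\<kappa> \<noteq> 0" using Wnz W\<kappa> by auto
  have h1: "pderiv F + [:0,1:] * pderiv (pderiv F) = pderiv A * L + A * pderiv L"
  proof -
    have "pderiv ([:0,1:] * pderiv F) = pderiv (A * L)" using XA by simp
    then show ?thesis by (simp add: pderiv_mult pderiv_pCons)
  qed
  have h2: "pderiv F = pderiv Q * L + Q * pderiv L" using FQL by (simp add: pderiv_mult)
  have "D = F * (pderiv F + [:0,1:] * pderiv (pderiv F)) - ([:0,1:] * pderiv F) * pderiv F"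
    by (simp add: D_def Dop_def algebra_simps)
  also have "\<dots> = F * (pderiv A * L + A * pderiv L) - (A * L) * pderiv F"
    unfolding h1 XA ..
  also have "\<dots> = (Q * L) * (pderiv A * L + A * pderiv L) - (A * L) * (pderiv Q * L + Q * pderiv L)"
    unfolding h2 unfolding FQL[symmetric] ..
  also have "\<dots> = L * L * (pderiv A * Q - A * pderiv Q)" by (simp add: algebra_simps)
  finally have "L * L * W = L * L * (pderiv A * Q - A * pderiv Q)" using DW by simp
  then have WAQ: "W = pderiv A * Q - A * pderiv Q" using Lnz by simp
  have "pderiv W = 0" using W\<kappa> by (simp add: pderiv_pCons)
  then have "pderiv (pderiv A) * Q = A * pderiv (pderiv Q)" unfolding WAQ
    by (simp add: pderiv_mult pderiv_diff algebra_simps)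
  then have AQ: "poly (pderiv (pderiv A)) z * poly Q z = poly A z * poly (pderiv (pderiv Q)) z" for z
    by (metis poly_mult)
  have Qr: "poly Q r = 0" if "r \<in> R" for r
  proof -
    have "(\<Prod>s\<in>R. poly [:-s,1:] r) = 0"
      by (rule prod_zero[OF finR]) (use that in auto)
    then show ?thesis by (simp add: Q_def poly_prod)
  qed
  have Q''r: "poly (pderiv (pderiv Q)) r = 0" if r: "r \<in> R" for r
  proof -
    have "poly W r = \<kappa>" using W\<kappa> by simp
    moreover have "poly W r = - poly A r * poly (pderiv Q) r" using WAQ Qr[OF r] by simp
    ultimately have "poly A r \<noteq> 0" using \<kappa>nz by auto
    moreover have "poly A r * poly (pderiv (pderiv Q)) r = 0" using AQ[of r] Qr[OF r] by simp
    ultimately show ?thesis by simp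
  qed
  have degQ: "degree Q = card R"
  proof -
    have "degree Q = degree (\<Prod>r\<in>R. [:-r,1:])" using cnz by (simp add: Q_def)
    also have "\<dots> = (\<Sum>r\<in>R. degree [:-r,1:])" by (rule degree_prod_eq_sum_degree) auto
    finally show ?thesis by simp
  qed
  have cR: "card R \<le> 1"
  proof (rule ccontr)
    assume "\<not> card R \<le> 1"
    then have c2: "card R \<ge> 2" by simp
    have "pderiv Q \<noteq> 0" using c2 degQ by (simp add: pderiv_eq_0_iff)
    moreover have "degree (pderiv Q) \<ge> 1" using c2 degQ by (simp add: degree_pderiv)
    ultimately have Q''nz: "pderiv (pderiv Q) \<noteq> 0" by (simp add: pderiv_eq_0_iff)
    have "R \<subseteq> {x. poly (pderiv (pderiv Q)) x = 0}" using Q''r by auto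
    then have "card R \<le> card {x. poly (pderiv (pderiv Q)) x = 0}"
      by (rule card_mono[OF poly_roots_finite[OF Q''nz]])
    also have "\<dots> \<le> degree (pderiv (pderiv Q))" by (rule card_poly_roots_bound[OF Q''nz])
    also have "\<dots> = card R - 2" using degQ by (simp add: degree_pderiv)
    finally show False using c2 by simp
  qed
  have "R \<noteq> {}"
  proof
    assume "R = {}"
    then have "\<not> (\<exists>z. poly F z = 0)" using R_def by auto
    then have "constant (poly F)" using fundamental_theorem_of_algebra by blast
    then have "degree F = 0" by (simp add: constant_degree)
    then show False using F'nz by (simp add: pderiv_eq_0_iff)
  qed
  then have "card R \<noteq> 0" using finR by simp
  then have "card R = 1" using cR by linarith
  then obtain r where Rr: "R = {r}" by (rule card_1_singletonE)
  have "F = smult c (\<Prod>z\<in>R. [:-z,1:]^order z F)" using complex_poly_decompose[of F] c_def R_def by simp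
  then have Fr: "F = smult c ([:-r,1:]^order r F)" unfolding Rr by simp
  have "degree F = order r F" by (subst Fr) (simp add: cnz degree_linear_power)
  then show ?thesis using Fr c_def by metis
qed

lemma key_C2:
  fixes F :: "complex poly"
  assumes F0: "poly F 0 = 1" and F1: "poly (pderiv F) 0 = 1" and dv: "Dop F dvd F^N"
  shows "degree F \<ge> 1 \<and> F = [:1, 1 / of_nat (degree F):]^degree F"
proof -
  obtain r where Fr: "F = smult (lead_coeff F) ([:-r,1:]^degree F)" using key_C[OF assms] by blast
  define k where "k = degree F"
  define c where "c = lead_coeff F"
  have Fr': "F = smult c ([:-r,1:]^k)" using Fr k_def c_def by simp
  have "pderiv F \<noteq> 0" using F1 by auto
  then have k1: "k \<ge> 1" using k_def by (simp add: pderiv_eq_0_iff)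
  have e0: "c * (-r)^k = 1" using F0 Fr' by (simp add: poly_power)
  have "pderiv F = smult c (smult (of_nat k) ([:-r,1:]^(k-1)))" using Fr'
    by (simp add: pderiv_power pderiv_smult pderiv_pCons)
  then have e1: "c * (of_nat k * (-r)^(k-1)) = 1" using F1 by (simp add: poly_power mult.assoc)
  have pk: "(-r)^k = (-r) * (-r)^(k-1)" using k1 by (simp add: power_eq_if)
  define u where "u = c * (-r)^(k-1)"
  have u1: "u * (-r) = 1" using e0 pk u_def by (simp add: ac_simps)
  have u2: "u * of_nat k = 1" using e1 u_def by (simp add: ac_simps)
  have unz: "u \<noteq> 0" using u1 by auto
  have rk: "-r = of_nat k" using u1 u2 unz by (metis mult_left_cancel)
  have kc: "c = (1 / of_nat k)^k" using e0 rk k1 by (simp add: power_divide field_simps)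
  have e3: "smult (1 / of_nat k) [:of_nat k,1:] = [:1, 1 / (of_nat k :: complex):]" using k1 by simp
  have "[:-r,1:] = [:of_nat k, 1:]" using rk by simp
  then have "F = smult ((1 / of_nat k)^k) ([:of_nat k,1:]^k)" using Fr' kc by simp
  also have "\<dots> = (smult (1 / of_nat k) [:of_nat k,1:])^k" by (rule smult_power[symmetric])
  also have "\<dots> = [:1, 1 / of_nat k:]^k" unfolding e3 ..
  finally have "F = [:1, 1 / of_nat k:]^k" .
  then show ?thesis using k1 k_def by simp
qed

abbreviation mpc :: "real poly \<Rightarrow> complex poly" where "mpc \<equiv> map_poly complex_of_real"

lemma mpc_coeff: "coeff (mpc p) n = complex_of_real (coeff p n)"
  by (simp add: coeff_map_poly)

lemma mpc_add: "mpc (p + q) = mpc p + mpc q"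
  by (rule poly_eqI) (simp add: mpc_coeff)
lemma mpc_diff: "mpc (p - q) = mpc p - mpc q"
  by (rule poly_eqI) (simp add: mpc_coeff)
lemma mpc_mult: "mpc (p * q) = mpc p * mpc q"
  by (rule poly_eqI) (simp add: mpc_coeff coeff_mult)
lemma mpc_power: "mpc (p ^ n) = mpc p ^ n"
  by (induction n) (simp_all add: mpc_mult)
lemma mpc_pderiv: "mpc (pderiv p) = pderiv (mpc p)"
  by (rule poly_eqI) (simp add: mpc_coeff coeff_pderiv)
lemma mpc_X: "mpc [:0,1:] = [:0,1:]"
  by (simp add: map_poly_pCons)
lemma mpc_Dop: "mpc (Dop f) = Dop (mpc f)"
  unfolding Dop_def by (simp add: mpc_add mpc_diff mpc_mult mpc_pderiv mpc_X map_poly_pCons)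
lemma mpc_poly0: "poly (mpc p) 0 = complex_of_real (poly p 0)"
  by (simp add: poly_0_coeff_0 mpc_coeff)
lemma mpc_inj: "mpc p = mpc q \<Longrightarrow> p = q"
proof (rule poly_eqI)
  fix n assume "mpc p = mpc q"
  then have "coeff (mpc p) n = coeff (mpc q) n" by simp
  then show "coeff p n = coeff q n" by (simp add: mpc_coeff)
qed

lemma key_R:
  fixes f G :: "real poly"
  assumes F0: "poly f 0 = 1" and F1: "poly (pderiv f) 0 = 1" and eqn: "Dop f * G = f^N"
  shows "degree f \<ge> 1 \<and> f = [:1, 1 / real (degree f):]^degree f"
proof -
  have a0: "poly (mpc f) 0 = 1" using F0 by (simp add: mpc_poly0)
  have a1: "poly (pderiv (mpc f)) 0 = 1" using F1 by (simp add: mpc_poly0 flip: mpc_pderiv)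
  have "Dop (mpc f) * mpc G = mpc f ^ N" using arg_cong[OF eqn, of mpc] by (simp add: mpc_mult mpc_power mpc_Dop)
  then have a2: "Dop (mpc f) dvd mpc f ^ N" by (metis dvd_triv_left)
  have dg: "degree (mpc f) = degree f" by (simp add: degree_map_poly)
  have "degree f \<ge> 1 \<and> mpc f = [:1, 1 / of_nat (degree f):]^degree f"
    using key_C2[OF a0 a1 a2] dg by simp
  moreover have "mpc ([:1, 1 / real (degree f):]^degree f) = [:1, 1 / of_nat (degree f):]^degree f"
    by (simp add: mpc_power map_poly_pCons)
  ultimately show ?thesis using mpc_inj by metis
qed

lemma det_rowdiag:
  fixes A :: "real^'n::finite^'n"
  assumes z: "\<And>\<alpha> \<beta>. \<alpha> \<noteq> i \<Longrightarrow> \<alpha> \<noteq> \<beta> \<Longrightarrow> A$\<alpha>$\<beta> = 0"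
  shows "det A = (\<Prod>\<alpha>\<in>UNIV. A$\<alpha>$\<alpha>)"
proof -
  let ?U = "UNIV:: 'n set"
  let ?PU = "{p. p permutes ?U}"
  let ?pp = "\<lambda>p. of_int (sign p) * prod (\<lambda>i. A$i$p i) (UNIV :: 'n set)"
  have fU: "finite ?U" by simp
  have id0: "{id} \<subseteq> ?PU" by (auto simp: permutes_id)
  have p0: "\<forall>p \<in> ?PU - {id}. ?pp p = 0"
  proof
    fix p
    assume p: "p \<in> ?PU - {id}"
    have "\<exists>\<alpha>. \<alpha> \<noteq> i \<and> p \<alpha> \<noteq> \<alpha>"
    proof (cases "p i = i")
      case True
      from p obtain \<alpha> where "p \<alpha> \<noteq> \<alpha>" by (auto simp: fun_eq_iff)
      then show ?thesis using True by metis
    next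
      case False
      have inj: "inj p" using p by (auto intro: permutes_inj)
      have "p (p i) \<noteq> p i"
      proof
        assume "p (p i) = p i"
        then have "p i = i" using inj by (auto dest: injD)
        then show False using False by simp
      qed
      then show ?thesis using False by metis
    qed
    then obtain \<alpha> where "\<alpha> \<noteq> i" "p \<alpha> \<noteq> \<alpha>" by blast
    then have "A$\<alpha>$p \<alpha> = 0" using z by metis
    then have "\<exists>i \<in> ?U. A$i$p i = 0" by blast
    with prod_zero[OF fU] show "?pp p = 0" by force
  qed
  from sum.mono_neutral_cong_left[OF finite_permutations[OF fU] id0 p0] show ?thesis
    unfolding det_def by (simp add: sign_id)
qed

definition sl :: "('n::finite \<Rightarrow> nat) set \<Rightarrow> (('n \<Rightarrow> nat) \<Rightarrow> real) \<Rightarrow> 'n \<Rightarrow> real^'n \<Rightarrow> real poly" where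
  "sl S a j x = (\<Sum>I\<in>S. monom (a I * (\<Prod>\<alpha>\<in>UNIV-{j}. (x$\<alpha>) ^ I \<alpha>)) (I j))"

lemma mp_sl: "mpoly_eval S a (\<chi> k. if k = j then s else x$k) = poly (sl S a j x) s"
  unfolding mpoly_eval_def sl_def poly_sum poly_monom
proof (rule sum.cong[OF refl])
  fix I
  have "(\<Prod>\<alpha>\<in>UNIV. (\<chi> k. if k = j then s else x$k) $ \<alpha> ^ I \<alpha>)
     = (\<chi> k. if k = j then s else x$k) $ j ^ I j * (\<Prod>\<alpha>\<in>UNIV-{j}. (\<chi> k. if k = j then s else x$k) $ \<alpha> ^ I \<alpha>)"
    by (rule prod.remove) auto
  also have "\<dots> = s ^ I j * (\<Prod>\<alpha>\<in>UNIV-{j}. x $ \<alpha> ^ I \<alpha>)"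
    by (auto intro!: prod.cong)
  finally show "a I * (\<Prod>\<alpha>\<in>UNIV. (\<chi> k. if k = j then s else x$k) $ \<alpha> ^ I \<alpha>) =
       a I * (\<Prod>\<alpha>\<in>UNIV - {j}. x $ \<alpha> ^ I \<alpha>) * s ^ I j" by simp
qed

lemma sl_upd: "sl S a j (\<chi> k. if k = j then s else x$k) = sl S a j x"
  unfolding sl_def by (auto intro!: sum.cong prod.cong arg_cong2[where f=monom])

lemma pd_sl: "pd j (mpoly_eval S a) x = poly (pderiv (sl S a j x)) (x$j)"
proof -
  have "(\<lambda>t. mpoly_eval S a (\<chi> k. if k = j then t else x$k)) = poly (sl S a j x)"
    by (rule ext) (rule mp_sl)
  then show ?thesis unfolding pd_def by (simp add: DERIV_imp_deriv[OF poly_DERIV])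
qed

lemma pd2_sl: "pd j (pd j (mpoly_eval S a)) x = poly (pderiv (pderiv (sl S a j x))) (x$j)"
proof -
  have "(\<lambda>t. pd j (mpoly_eval S a) (\<chi> k. if k = j then t else x$k)) = poly (pderiv (sl S a j x))"
    by (rule ext) (simp add: pd_sl sl_upd)
  then show ?thesis unfolding pd_def[of j "pd j (mpoly_eval S a)"] by (simp add: DERIV_imp_deriv[OF poly_DERIV])
qed

lemma axis_upd: "axis i t = (\<chi> k. if k = i then t else (0::real^'n::finite)$k)"
  by (simp add: axis_def vec_eq_iff)

definition gp :: "('n::finite \<Rightarrow> nat) set \<Rightarrow> (('n \<Rightarrow> nat) \<Rightarrow> real) \<Rightarrow> 'n \<Rightarrow> 'n \<Rightarrow> real poly" where
  "gp S a i j = (\<Sum>I\<in>S. if I j = 1 then monom (a I * (\<Prod>\<alpha>\<in>UNIV-{i,j}. (0::real) ^ I \<alpha>)) (I i) else 0)"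

lemma ax0: "mpoly_eval S a (axis i t) = poly (sl S a i 0) t"
  unfolding axis_upd by (rule mp_sl)

lemma ax1: "pd i (mpoly_eval S a) (axis i t) = poly (pderiv (sl S a i 0)) t"
  unfolding pd_sl by (simp only: axis_upd sl_upd) simp

lemma ax2: "pd i (pd i (mpoly_eval S a)) (axis i t) = poly (pderiv (pderiv (sl S a i 0))) t"
  unfolding pd2_sl by (simp only: axis_upd sl_upd) simp

lemma axj:
  assumes ji: "j \<noteq> i"
  shows "pd j (mpoly_eval S a) (axis i t) = poly (gp S a i j) t"
proof -
  have aj: "axis i t $ j = 0" using ji by (simp add: axis_def)
  have "pd j (mpoly_eval S a) (axis i t) = coeff (sl S a j (axis i t)) 1"
    unfolding pd_sl aj by (simp add: poly_0_coeff_0 coeff_pderiv)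
  also have "\<dots> = (\<Sum>I\<in>S. if I j = 1 then a I * (\<Prod>\<alpha>\<in>UNIV-{j}. (axis i t $ \<alpha>) ^ I \<alpha>) else 0)"
    unfolding sl_def coeff_sum coeff_monom by (rule sum.cong) auto
  also have "\<dots> = poly (gp S a i j) t"
    unfolding gp_def poly_sum
  proof (rule sum.cong[OF refl])
    fix I
    have "(\<Prod>\<alpha>\<in>UNIV-{j}. (axis i t $ \<alpha>) ^ I \<alpha>) = (axis i t $ i) ^ I i * (\<Prod>\<alpha>\<in>UNIV-{j}-{i}. (axis i t $ \<alpha>) ^ I \<alpha>)"
      by (rule prod.remove) (use ji in auto)
    also have "\<dots> = t ^ I i * (\<Prod>\<alpha>\<in>UNIV-{i,j}. (0::real) ^ I \<alpha>)"
      by (auto simp: axis_def intro!: prod.cong)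
    finally show "(if I j = 1 then a I * (\<Prod>\<alpha>\<in>UNIV-{j}. (axis i t $ \<alpha>) ^ I \<alpha>) else 0) =
       poly (if I j = 1 then monom (a I * (\<Prod>\<alpha>\<in>UNIV-{i,j}. (0::real) ^ I \<alpha>)) (I i) else 0) t"
      by (simp add: poly_monom)
  qed
  finally show ?thesis .
qed

lemma prod0: "finite A \<Longrightarrow> (\<Prod>\<alpha>\<in>A. (0::real) ^ (I \<alpha>)) = (if \<forall>\<alpha>\<in>A. I \<alpha> = 0 then 1 else 0)"
  by (induction A rule: finite_induct) auto

lemma pick:
  assumes "finite S" "\<And>I. I \<in> S \<Longrightarrow> F I = (if I = T then a I else 0)"
  shows "sum F S = (if T \<in> S then a T else (0::real))"
proof -
  have "sum F S = (\<Sum>I\<in>S. if I = T then a I else 0)" using assms(2) by (rule sum.cong[OF refl])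
  also have "\<dots> = (if T \<in> S then a T else 0)" using assms(1) by (simp add: sum.delta')
  finally show ?thesis .
qed

lemma cf:
  assumes "finite S"
  shows "coeff (sl S a i 0) m = (if (\<lambda>\<alpha>. if \<alpha> = i then m else 0) \<in> S then a (\<lambda>\<alpha>. if \<alpha> = i then m else 0) else 0)"
  unfolding sl_def coeff_sum coeff_monom
proof (rule pick[OF assms])
  fix I :: "'a \<Rightarrow> nat"
  have e: "(I i = m \<and> (\<forall>\<alpha>\<in>UNIV-{i}. I \<alpha> = 0)) \<longleftrightarrow> I = (\<lambda>\<alpha>. if \<alpha> = i then m else 0)"
  proof
    assume H: "I i = m \<and> (\<forall>\<alpha>\<in>UNIV-{i}. I \<alpha> = 0)"
    show "I = (\<lambda>\<alpha>. if \<alpha> = i then m else 0)"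
    proof (rule ext)
      fix x show "I x = (if x = i then m else 0)"
        using H by (cases "x = i") auto
    qed
  qed auto
  show "(if I i = m then a I * (\<Prod>\<alpha>\<in>UNIV - {i}. (0::real^'a) $ \<alpha> ^ I \<alpha>) else 0) =
      (if I = (\<lambda>\<alpha>. if \<alpha> = i then m else 0) then a I else 0)"
    unfolding e[symmetric] by (auto simp: prod0)
qed

lemma cg:
  assumes "finite S" "j \<noteq> i"
  shows "coeff (gp S a i j) m = (if (\<lambda>\<alpha>. if \<alpha> = i then m else if \<alpha> = j then 1 else 0) \<in> S
     then a (\<lambda>\<alpha>. if \<alpha> = i then m else if \<alpha> = j then 1 else 0) else 0)"
  unfolding gp_def coeff_sum
proof (rule pick[OF assms(1)])
  fix I :: "'a \<Rightarrow> nat"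
  have e: "(I j = 1 \<and> I i = m \<and> (\<forall>\<alpha>\<in>UNIV-{i,j}. I \<alpha> = 0)) \<longleftrightarrow> I = (\<lambda>\<alpha>. if \<alpha> = i then m else if \<alpha> = j then 1 else 0)"
  proof
    assume H: "I j = 1 \<and> I i = m \<and> (\<forall>\<alpha>\<in>UNIV-{i,j}. I \<alpha> = 0)"
    show "I = (\<lambda>\<alpha>. if \<alpha> = i then m else if \<alpha> = j then 1 else 0)"
    proof (rule ext)
      fix x show "I x = (if x = i then m else if x = j then 1 else 0)"
        using H by (cases "x = i"; cases "x = j") auto
    qed
  qed (use assms(2) in auto)
  show "coeff (if I j = 1 then monom (a I * (\<Prod>\<alpha>\<in>UNIV - {i, j}. (0::real) ^ I \<alpha>)) (I i) else 0) m =
      (if I = (\<lambda>\<alpha>. if \<alpha> = i then m else if \<alpha> = j then 1 else 0) then a I else 0)"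
    unfolding e[symmetric] by (auto simp: prod0 coeff_monom)
qed

lemma unit_const: "(g::real poly) dvd 1 \<Longrightarrow> \<exists>c h. g = smult c (p^h)"
proof -
  assume "g dvd 1"
  then obtain c where "g = [:c:]" by (auto simp: is_unit_poly_iff)
  then have "g = smult c (p^0)" by simp
  then show ?thesis by blast
qed

lemma dvd_prime_pow_poly:
  fixes p g :: "real poly"
  assumes pr: "prime_elem p"
  shows "g dvd p^M \<Longrightarrow> \<exists>c h. g = smult c (p^h)"
proof (induction M arbitrary: g)
  case 0 then show ?case by (simp add: unit_const)
next
  case (Suc M)
  have pnz: "p \<noteq> 0" using pr by auto
  show ?case
  proof (cases "p dvd g")
    case True
    then obtain g' where g': "g = p * g'" by (elim dvdE)
    then have "p * g' dvd p * p^M" using Suc.prems by simp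
    then have "g' dvd p^M" using pnz by simp
    then obtain c h where "g' = smult c (p^h)" using Suc.IH by blast
    then have "g = smult c (p^Suc h)" using g' by (simp add: mult_smult_right)
    then show ?thesis by blast
  next
    case False
    from Suc.prems obtain q where q: "p^Suc M = g * q" by (elim dvdE)
    then have "p dvd g * q" by (metis dvd_triv_left power_Suc)
    then have "p dvd q" using False pr by (simp add: prime_elem_dvd_mult_iff)
    then obtain q' where q': "q = p * q'" by (elim dvdE)
    have "p * p^M = p * (g * q')" using q q' by (simp add: ac_simps)
    then have "p^M = g * q'" using pnz by simp
    then have "g dvd p^M" by simp
    then show ?thesis using Suc.IH by blast
  qed
qed

lemma Dop_smult: "Dop (smult c F) = smult (c*c) (Dop F)"
  unfolding Dop_def by (simp add: pderiv_smult mult_smult_left mult_smult_right smult_diff_right smult_add_right)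

lemma Dop_p:
  assumes k1: "k \<ge> 1"
  shows "Dop ([:1, 1/real k:]^k) = [:1, 1/real k:]^(2*k-2)"
proof -
  have b: "[:1, 1/real k:] = smult (1/real k) [:-(- real k),1:]" using k1 by simp
  have "Dop ([:1, 1/real k:]^k) = smult ((1/real k)^k * (1/real k)^k) (smult (- of_nat k * (- real k)) ([:-(- real k),1:]^(2*k-2)))"
    unfolding b smult_power Dop_smult Dop_pow ..
  also have "\<dots> = smult ((1/real k)^(2*k-2)) ([:-(- real k),1:]^(2*k-2))"
  proof -
    have "(1/real k)^k * (1/real k)^k * (- of_nat k * (- real k)) = (1/real k)^(2*k-2)"
    proof -
      have e: "2*k = (2*k-2) + 2" using k1 by simp
      have "(1/real k)^k * (1/real k)^k = (1/real k)^(2*k-2) * (1/real k)^2"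
        by (subst power_add[symmetric])+ (use e in \<open>simp add: mult_2\<close>)
      then show ?thesis using k1 by (simp add: power2_eq_square field_simps)
    qed
    then show ?thesis by simp
  qed
  also have "\<dots> = [:1, 1/real k:]^(2*k-2)" unfolding b smult_power ..
  finally show ?thesis .
qed

lemma coeff_p_pow: "coeff ([:1,c:]^h) 1 = of_nat h * (c::real)"
proof -
  have "coeff ([:1,c:]^h) 1 = poly (pderiv ([:1,c:]^h)) 0" by (simp add: poly_0_coeff_0 coeff_pderiv)
  also have "\<dots> = of_nat h * c" by (simp add: pderiv_power pderiv_pCons poly_power)
  finally show ?thesis .
qed

lemma poly_eq_from:
  fixes p q f :: "real poly"
  assumes fnz: "f \<noteq> 0" and h: "\<And>t. poly f t \<noteq> 0 \<Longrightarrow> poly p t = poly q t"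
  shows "p = q"
proof (rule ccontr)
  assume "p \<noteq> q"
  then have dnz: "p - q \<noteq> 0" by simp
  have "UNIV \<subseteq> {t. poly (p - q) t = 0} \<union> {t. poly f t = 0}" using h by auto
  moreover have "finite ({t. poly (p - q) t = 0} \<union> {t. poly f t = 0})"
    using poly_roots_finite[OF dnz] poly_roots_finite[OF fnz] by simp
  ultimately have "finite (UNIV :: real set)" by (rule finite_subset)
  then show False using infinite_UNIV_char_0 by blast
qed

theorem lemma7:
  fixes S :: "('n::finite \<Rightarrow> nat) set" and a :: "('n \<Rightarrow> nat) \<Rightarrow> real"
  defines "P \<equiv> mpoly_eval S a"
  assumes n2: "CARD('n) \<ge> 2"
    and finS: "finite S"
    and lowS: "\<And>I. mdeg I \<le> 1 \<Longrightarrow> I \<in> S"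
    and apos: "\<And>I. I \<in> S \<Longrightarrow> a I > 0"
    and alow: "\<And>I. mdeg I \<le> 1 \<Longrightarrow> a I = 1"
    and eq: "\<And>x::real^'n.
       det (\<chi> \<alpha> \<beta>. (P x * pd \<alpha> (pd \<beta> P) x - pd \<alpha> P x * pd \<beta> P x) * x$\<alpha>
                      + P x * pd \<alpha> P x * (if \<alpha> = \<beta> then 1 else 0))
         / P x ^ (CARD('n) - 1) = P x ^ CARD('n)"
  shows "\<exists>k :: 'n \<Rightarrow> nat. \<exists>h :: 'n \<Rightarrow> 'n \<Rightarrow> nat.
     (\<forall>i. k i > 0
        \<and> (\<forall>t::real. P (axis i t) = (1 + t / real (k i)) ^ k i)
        \<and> (\<forall>j. j \<noteq> i \<longrightarrow> (\<forall>t::real. pd j P (axis i t) = (1 + t / real (k i)) ^ h i j))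
        \<and> (\<Sum>\<alpha>\<in>UNIV - {i}. h i \<alpha>) = k i * (CARD('n) - 2) + 2)
   \<and> (\<forall>i j. i \<noteq> j \<longrightarrow> real (h i j) / real (k i) = real (h j i) / real (k j))"
proof -
  define N where "N = CARD('n)"
  define f where "f i = sl S a i 0" for i
  define g where "g i j = gp S a i j" for i j
  define G where "G i = (\<Prod>j\<in>UNIV-{i}. g i j)" for i
  have mdE: "mdeg (\<lambda>\<alpha>::'n. if \<alpha> = j then 1 else 0) \<le> 1" for j
    by (simp add: mdeg_def)
  have f0: "poly (f i) 0 = 1" for i
  proof -
    have "mdeg (\<lambda>\<alpha>::'n. if \<alpha> = i then 0 else 0) \<le> 1" by (simp add: mdeg_def)
    then show ?thesis using lowS alow unfolding f_def poly_0_coeff_0 cf[OF finS] by simp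
  qed
  have f1: "poly (pderiv (f i)) 0 = 1" for i
  proof -
    have "poly (pderiv (f i)) 0 = coeff (f i) 1" by (simp add: poly_0_coeff_0 coeff_pderiv)
    then show ?thesis using lowS[OF mdE] alow[OF mdE] unfolding f_def cf[OF finS] by simp
  qed
  have g0: "poly (g i j) 0 = 1" if ji: "j \<noteq> i" for i j
  proof -
    have e: "(\<lambda>\<alpha>::'n. if \<alpha> = i then 0 else if \<alpha> = j then 1 else 0) = (\<lambda>\<alpha>. if \<alpha> = j then 1 else 0)"
      using ji by (auto simp: fun_eq_iff)
    show ?thesis using lowS[OF mdE] alow[OF mdE] unfolding g_def poly_0_coeff_0 cg[OF finS ji] e by simp
  qed
  have fnz: "f i \<noteq> 0" for i using f0[of i] by auto
  have eqn: "Dop (f i) * G i = f i ^ N" for i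
  proof (rule poly_eq_from[OF fnz[of i]])
    fix t assume ft: "poly (f i) t \<noteq> 0"
    define x where "x = axis i t"
    have Px: "P x = poly (f i) t" unfolding P_def x_def f_def by (rule ax0)
    have Pi: "pd i P x = poly (pderiv (f i)) t" unfolding P_def x_def f_def by (rule ax1)
    have Pii: "pd i (pd i P) x = poly (pderiv (pderiv (f i))) t" unfolding P_def x_def f_def by (rule ax2)
    have Pj: "pd j P x = poly (g i j) t" if "j \<noteq> i" for j unfolding P_def x_def g_def by (rule axj[OF that])
    have x0: "x$\<alpha> = 0" if "\<alpha> \<noteq> i" for \<alpha> using that by (simp add: x_def axis_def)
    have xi: "x$i = t" by (simp add: x_def)
    define M where "M = (\<chi> \<alpha> \<beta>. (P x * pd \<alpha> (pd \<beta> P) x - pd \<alpha> P x * pd \<beta> P x) * x$\<alpha>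
                      + P x * pd \<alpha> P x * (if \<alpha> = \<beta> then 1 else (0::real)))"
    have "det M = (\<Prod>\<alpha>\<in>UNIV. M$\<alpha>$\<alpha>)"
      by (rule det_rowdiag[where i=i]) (simp add: M_def x0)
    also have "\<dots> = M$i$i * (\<Prod>\<alpha>\<in>UNIV-{i}. M$\<alpha>$\<alpha>)" by (rule prod.remove) auto
    also have "(\<Prod>\<alpha>\<in>UNIV-{i}. M$\<alpha>$\<alpha>) = (\<Prod>\<alpha>\<in>UNIV-{i}. P x * poly (g i \<alpha>) t)"
      by (rule prod.cong) (auto simp: M_def x0 Pj)
    also have "\<dots> = P x ^ (N - 1) * poly (G i) t"
      by (simp add: prod.distrib G_def poly_prod N_def card_Diff_singleton)
    also have "M$i$i = poly (Dop (f i)) t"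
      by (simp add: M_def xi Px Pi Pii Dop_def algebra_simps)
    finally have dM: "det M = poly (Dop (f i)) t * (P x ^ (N - 1) * poly (G i) t)" .
    have "det M / P x ^ (N - 1) = P x ^ N" using eq[of x] unfolding M_def N_def .
    then have "poly (Dop (f i)) t * poly (G i) t = P x ^ N" using ft Px dM by (simp add: field_simps)
    then show "poly (Dop (f i) * G i) t = poly (f i ^ N) t" using Px by (simp add: poly_power)
  qed
  define k where "k i = degree (f i)" for i
  define pp where "pp i = [:1, 1 / real (k i):]" for i
  have K: "k i \<ge> 1 \<and> f i = pp i ^ k i" for i
    using key_R[OF f0 f1 eqn] unfolding k_def pp_def by blast
  have N2: "N \<ge> 2" using n2 N_def by simp
  have ppnz: "pp i \<noteq> 0" for i by (simp add: pp_def)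
  have pp0: "poly (pp i) 0 = 1" for i by (simp add: pp_def)
  have prp: "prime_elem (pp i)" for i
    unfolding pp_def using K[of i] by (intro prime_elem_linear_field_poly) simp
  have GG: "G i = pp i ^ (k i * (N - 2) + 2)" for i
  proof -
    have k1: "k i \<ge> 1" using K by blast
    have "Dop (f i) = pp i ^ (2 * k i - 2)" using K[of i] Dop_p[OF k1] by (simp add: pp_def)
    then have "pp i ^ (2 * k i - 2) * G i = pp i ^ (k i * N)" using eqn[of i] K[of i] by (simp add: power_mult[symmetric] mult.commute)
    also have "k i * N = (2 * k i - 2) + (k i * (N - 2) + 2)"
    proof -
      have "k i * N = k i * (N - 2) + 2 * k i" using N2 by (simp add: algebra_simps diff_mult_distrib2)
      then show ?thesis using k1 by simp
    qed
    finally have "pp i ^ (2 * k i - 2) * G i = pp i ^ (2 * k i - 2) * pp i ^ (k i * (N - 2) + 2)"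
      by (simp only: power_add)
    then show ?thesis using ppnz[of i] by simp
  qed
  have exh: "\<exists>h. g i j = pp i ^ h" if ji: "j \<noteq> i" for i j
  proof -
    have "g i j dvd G i" unfolding G_def by (rule dvd_prodI) (use ji in auto)
    then have "g i j dvd pp i ^ (k i * (N - 2) + 2)" using GG by simp
    then obtain c h where ch: "g i j = smult c (pp i ^ h)" using dvd_prime_pow_poly[OF prp] by blast
    have "c = 1" using g0[OF ji] ch pp0 by (simp add: poly_power)
    then show ?thesis using ch by auto
  qed
  define h where "h i j = (if j = i then 0 else (SOME h. g i j = pp i ^ h))" for i j
  have hg: "g i j = pp i ^ h i j" if "j \<noteq> i" for i j
    using someI_ex[OF exh[OF that]] that by (simp add: h_def)
  have hsum: "(\<Sum>\<alpha>\<in>UNIV - {i}. h i \<alpha>) = k i * (N - 2) + 2" for i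
  proof -
    have "G i = (\<Prod>j\<in>UNIV-{i}. pp i ^ h i j)" unfolding G_def by (rule prod.cong) (auto simp: hg)
    also have "\<dots> = pp i ^ (\<Sum>\<alpha>\<in>UNIV - {i}. h i \<alpha>)" by (rule power_sum[symmetric])
    finally have "pp i ^ (\<Sum>\<alpha>\<in>UNIV - {i}. h i \<alpha>) = pp i ^ (k i * (N - 2) + 2)" using GG by simp
    then have "degree (pp i ^ (\<Sum>\<alpha>\<in>UNIV - {i}. h i \<alpha>)) = degree (pp i ^ (k i * (N - 2) + 2))" by simp
    moreover have "degree (pp i) = 1" using K[of i] by (simp add: pp_def)
    then have "degree (pp i ^ m) = m" for m using ppnz[of i] degree_power_eq[of "pp i" m] by simp
    ultimately show ?thesis by metis
  qed
  have polypp: "poly (pp i ^ m) t = (1 + t / real (k i)) ^ m" for i m t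
    by (simp add: pp_def poly_power)
  have coeffg: "coeff (g i j) 1 = real (h i j) / real (k i)" if "j \<noteq> i" for i j
    using that coeff_p_pow[of "1 / real (k i)" "h i j"] by (simp add: hg pp_def)
  have gsym: "coeff (g i j) 1 = coeff (g j i) 1" if "j \<noteq> i" for i j
  proof -
    have e: "(\<lambda>\<alpha>::'n. if \<alpha> = i then 1 else if \<alpha> = j then 1 else 0) = (\<lambda>\<alpha>. if \<alpha> = j then 1 else if \<alpha> = i then 1 else 0)"
      by (auto simp: fun_eq_iff)
    show ?thesis unfolding g_def cg[OF finS that] cg[OF finS that[symmetric]] e ..
  qed
  show ?thesis
  proof (intro exI conjI allI impI)
    fix i
    show "k i > 0" using K[of i] by simp
    show "P (axis i t) = (1 + t / real (k i)) ^ k i" for t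
      unfolding P_def ax0 using K[of i] polypp by (simp add: f_def)
    show "(\<Sum>\<alpha>\<in>UNIV - {i}. h i \<alpha>) = k i * (CARD('n) - 2) + 2" using hsum N_def by simp
    fix j
    assume ji: "j \<noteq> i"
    show "pd j P (axis i t) = (1 + t / real (k i)) ^ h i j" for t
      unfolding P_def axj[OF ji] using hg[OF ji] polypp by (simp add: g_def)
  next
    fix i j :: 'n assume ij: "i \<noteq> j"
    show "real (h i j) / real (k i) = real (h j i) / real (k j)"
      using coeffg[OF ij[symmetric]] coeffg[OF ij] gsym[OF ij[symmetric]] by simp
  qed
qed

end
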